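(* Let $f$ be a non-increasing real function on the battery energy states. If $0\le u_1\le u_2\le\epsilon_0$, then $$\sum_{\epsilon_1}p(\epsilon_1|\epsilon_0,u_1)f(\epsilon_1)\le\sum_{\epsilon_2}p(\epsilon_2|\epsilon_0,u_2)f(\epsilon_2),$$ where $p(\epsilon'|\epsilon_0,u)=\Pr\{Q(\epsilon_0-u+E_H)=\epsilon'\}$ is the probability that the battery is in energy state $\epsilon'$ in the next block given current energy $\epsilon_0$ and harvested energy $u$ consumed in the current block.
   Context: Parameters $B_m>0$ and a positive integer $M$. Battery energy states are $\{(2m-1)B_m/(2M): m=1,\dots,M\}$, and the quantizer is $Q(\varepsilon)=\big(2\min\{\lfloor M\min\{\varepsilon,B_m\}/B_m\rfloor+1,M\}-1\big)B_m/(2M)$ for $\varepsilon\ge0$. $E_H$ is a random variable with density $f_{E_H}$ on $[0,E_m]$, $E_m>0$. $\epsilon_0$ is a battery energy state. *)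

theory Defs
  imports "HOL-Probability.Probability"
begin

definition battery_states :: "real \<Rightarrow> nat \<Rightarrow> real set" where
  "battery_states Bm M = (\<lambda>m::nat. (2 * real m - 1) * Bm / (2 * real M)) ` {1..M}"

definition quant :: "real \<Rightarrow> nat \<Rightarrow> real \<Rightarrow> real" where
  "quant Bm M \<epsilon> =
     (2 * real_of_int (min (\<lfloor>real M * min \<epsilon> Bm / Bm\<rfloor> + 1) (int M)) - 1) * Bm / (2 * real M)"

definition trans_prob ::
  "'w measure \<Rightarrow> ('w \<Rightarrow> real) \<Rightarrow> real \<Rightarrow> nat \<Rightarrow> real \<Rightarrow> real \<Rightarrow> real \<Rightarrow> real" where
  "trans_prob P EH Bm M e' e0 u = measure P {\<omega> \<in> space P. quant Bm M (e0 - u + EH \<omega>) = e'}"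

end

theory Submission
  imports Defs
begin

lemma quant_meas:
  assumes "EH \<in> borel_measurable P"
  shows "(\<lambda>\<omega>. quant Bm M (c + EH \<omega>)) \<in> borel_measurable P"
  unfolding quant_def using assms by measurable

lemma quant_mono: assumes "Bm > 0" "M > 0" "x \<le> y" shows "quant Bm M x \<le> quant Bm M y"
proof -
  have "real M * min x Bm / Bm \<le> real M * min y Bm / Bm"
    using assms by (intro divide_right_mono mult_left_mono) auto
  hence "\<lfloor>real M * min x Bm / Bm\<rfloor> \<le> \<lfloor>real M * min y Bm / Bm\<rfloor>" by (rule floor_mono)
  hence "real_of_int (min (\<lfloor>real M * min x Bm / Bm\<rfloor> + 1) (int M)) \<le> real_of_int (min (\<lfloor>real M * min y Bm / Bm\<rfloor> + 1) (int M))"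
    by simp
  thus ?thesis unfolding quant_def using assms
    by (intro divide_right_mono mult_right_mono) auto
qed

lemma quant_in: assumes "Bm > 0" "M > 0" "0 \<le> x" shows "quant Bm M x \<in> battery_states Bm M"
proof -
  define k where "k = min (\<lfloor>real M * min x Bm / Bm\<rfloor> + 1) (int M)"
  have "0 \<le> real M * min x Bm / Bm" using assms by auto
  hence "k \<ge> 1" unfolding k_def using assms by auto
  moreover have "k \<le> int M" unfolding k_def by auto
  ultimately have "nat k \<in> {1..M}" by auto
  moreover have "quant Bm M x = (2 * real (nat k) - 1) * Bm / (2 * real M)"
    unfolding quant_def k_def[symmetric] using \<open>k \<ge> 1\<close> by simp
  ultimately show ?thesis unfolding battery_states_def by blast
qed

lemma sum_as_int:
  assumes ps: "prob_space P" and m: "EH \<in> borel_measurable P" and fin: "finite S"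
  shows "(\<Sum>s\<in>S. measure P {\<omega> \<in> space P. quant Bm M (c + EH \<omega>) = s} * f s)
     = integral\<^sup>L P (\<lambda>\<omega>. \<Sum>s\<in>S. indicator {\<omega> \<in> space P. quant Bm M (c + EH \<omega>) = s} \<omega> * f s)"
proof -
  interpret prob_space P by (rule ps)
  have A: "{\<omega> \<in> space P. quant Bm M (c + EH \<omega>) = s} \<in> sets P" for s
    using quant_meas[OF m, of Bm M c] by measurable
  have "integral\<^sup>L P (\<lambda>\<omega>. \<Sum>s\<in>S. indicator {\<omega> \<in> space P. quant Bm M (c + EH \<omega>) = s} \<omega> * f s)
     = (\<Sum>s\<in>S. integral\<^sup>L P (\<lambda>\<omega>. indicator {\<omega> \<in> space P. quant Bm M (c + EH \<omega>) = s} \<omega> * f s))"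
    by (rule Bochner_Integration.integral_sum) (auto intro!: integrable_mult_left integrable_real_indicator A simp: less_top[symmetric])
  also have "\<dots> = (\<Sum>s\<in>S. measure P {\<omega> \<in> space P. quant Bm M (c + EH \<omega>) = s} * f s)"
    using A by (simp add: integral_indicator)
  finally show ?thesis by simp
qed

lemma sum_indicator_pt:
  assumes "finite S" "Q \<omega> \<in> S"
  shows "(\<Sum>s\<in>S. indicator {\<omega> \<in> X. Q \<omega> = s} \<omega> * (f s::real)) = (if \<omega> \<in> X then f (Q \<omega>) else 0)"
proof -
  have "(\<Sum>s\<in>S. indicator {\<omega> \<in> X. Q \<omega> = s} \<omega> * f s) = (\<Sum>s\<in>S. if Q \<omega> = s then (if \<omega> \<in> X then f s else 0) else 0)"
    by (intro sum.cong) (simp_all add: indicator_def)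
  also have "\<dots> = (if \<omega> \<in> X then f (Q \<omega>) else 0)" using assms by (simp add: sum.delta)
  finally show ?thesis .
qed

theorem lemma2:
  fixes P :: "'w measure" and EH :: "'w \<Rightarrow> real" and fEH :: "real \<Rightarrow> real"
    and Bm Em \<epsilon>0 u1 u2 :: real and M :: nat and f :: "real \<Rightarrow> real"
  assumes "Bm > 0" and "M > 0" and "Em > 0"
    and "prob_space P"
    and "distributed P lborel EH (\<lambda>x. ennreal (fEH x))"
    and "\<And>x. fEH x \<ge> 0"
    and "\<And>x. x \<notin> {0..Em} \<Longrightarrow> fEH x = 0"
    and "\<epsilon>0 \<in> battery_states Bm M"
    and "\<And>a b. a \<in> battery_states Bm M \<Longrightarrow> b \<in> battery_states Bm M \<Longrightarrow> a \<le> b \<Longrightarrow> f b \<le> f a"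
    and "0 \<le> u1" and "u1 \<le> u2" and "u2 \<le> \<epsilon>0"
  shows "(\<Sum>\<epsilon>1\<in>battery_states Bm M. trans_prob P EH Bm M \<epsilon>1 \<epsilon>0 u1 * f \<epsilon>1)
       \<le> (\<Sum>\<epsilon>2\<in>battery_states Bm M. trans_prob P EH Bm M \<epsilon>2 \<epsilon>0 u2 * f \<epsilon>2)"
proof -
  interpret prob_space P by (rule assms(4))
  define S where "S = battery_states Bm M"
  have fin: "finite S" unfolding S_def battery_states_def by simp
  have mEH: "EH \<in> measurable P lborel" and dist: "distr P lborel EH = density lborel (\<lambda>x. ennreal (fEH x))"
    using assms(5) by (auto simp: distributed_def)
  have m: "EH \<in> borel_measurable P" using mEH by simp
  have "emeasure P (EH -` {..<0} \<inter> space P) = emeasure (distr P lborel EH) {..<0}"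
    using mEH by (simp add: emeasure_distr)
  also have "\<dots> = (\<integral>\<^sup>+ x. ennreal (fEH x) * indicator {..<0} x \<partial>lborel)"
    unfolding dist using distributed_borel_measurable[OF assms(5)]
    by (subst emeasure_density) auto
  also have "\<dots> = (\<integral>\<^sup>+ (x::real). 0 \<partial>lborel)"
    by (rule nn_integral_cong) (auto simp: indicator_def assms(7))
  finally have null: "emeasure P (EH -` {..<0} \<inter> space P) = 0" by simp
  have AE: "AE \<omega> in P. EH \<omega> \<ge> 0"
  proof (rule AE_I'[where N="EH -` {..<0} \<inter> space P"])
    show "EH -` {..<0} \<inter> space P \<in> null_sets P" using null mEH by (auto simp: null_sets_def)
  qed auto
  have tp: "trans_prob P EH Bm M e \<epsilon>0 u = measure P {\<omega> \<in> space P. quant Bm M ((\<epsilon>0 - u) + EH \<omega>) = e}" for e u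
    unfolding trans_prob_def by (simp add: algebra_simps)
  show ?thesis
    unfolding S_def[symmetric] tp
    unfolding sum_as_int[OF assms(4) m fin]
  proof (rule integral_mono_AE)
    have integ: "integrable P (\<lambda>\<omega>. \<Sum>s\<in>S. indicator {\<omega> \<in> space P. quant Bm M (\<epsilon>0 - u + EH \<omega>) = s} \<omega> * f s)" for u
    proof (intro Bochner_Integration.integrable_sum integrable_mult_left integrable_real_indicator)
      fix s
      show "{\<omega> \<in> space P. quant Bm M (\<epsilon>0 - u + EH \<omega>) = s} \<in> sets P"
        using quant_meas[OF m, of Bm M "\<epsilon>0 - u"] by measurable
      then show "emeasure P {\<omega> \<in> space P. quant Bm M (\<epsilon>0 - u + EH \<omega>) = s} < \<infinity>"
        by (simp add: less_top[symmetric])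
    qed
    show "integrable P (\<lambda>\<omega>. \<Sum>s\<in>S. indicator {\<omega> \<in> space P. quant Bm M (\<epsilon>0 - u1 + EH \<omega>) = s} \<omega> * f s)"
      "integrable P (\<lambda>\<omega>. \<Sum>s\<in>S. indicator {\<omega> \<in> space P. quant Bm M (\<epsilon>0 - u2 + EH \<omega>) = s} \<omega> * f s)"
      by (rule integ)+
    show "AE \<omega> in P. (\<Sum>s\<in>S. indicator {\<omega> \<in> space P. quant Bm M (\<epsilon>0 - u1 + EH \<omega>) = s} \<omega> * f s)
        \<le> (\<Sum>s\<in>S. indicator {\<omega> \<in> space P. quant Bm M (\<epsilon>0 - u2 + EH \<omega>) = s} \<omega> * f s)"
      using AE
    proof eventually_elim
      case (elim \<omega>)
      have i1: "quant Bm M (\<epsilon>0 - u1 + EH \<omega>) \<in> S" unfolding S_def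
        using elim assms by (intro quant_in) auto
      have i2: "quant Bm M (\<epsilon>0 - u2 + EH \<omega>) \<in> S" unfolding S_def
        using elim assms by (intro quant_in) auto
      have le: "quant Bm M (\<epsilon>0 - u2 + EH \<omega>) \<le> quant Bm M (\<epsilon>0 - u1 + EH \<omega>)"
        using assms by (intro quant_mono) auto
      show ?case
        unfolding sum_indicator_pt[where Q="\<lambda>\<omega>. quant Bm M (\<epsilon>0 - u1 + EH \<omega>)", OF fin i1]
          sum_indicator_pt[where Q="\<lambda>\<omega>. quant Bm M (\<epsilon>0 - u2 + EH \<omega>)", OF fin i2]
        using assms(9)[OF i2[unfolded S_def] i1[unfolded S_def] le] by simp
    qed
  qed
qed

end
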